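(* Assume (A.3). Then there are finite constants $C_M,C_b,C_f>0$, independent of $h$, such that for all sufficiently small $h$: \[ |M(y^\star(0),y^\star(T))-M(\hat y_h(0),\hat y_h(T))|\le C_Mh^{\lambda\eta},\qquad \|b(\hat y_h(0),\hat y_h(T))\|_2^2\le C_bh^{2\lambda\eta}, \] and, for almost every $t\in[0,T]$, \[ \big\|\big(f_1(y^\star(t),u^\star(t),t)-f_1(\hat y_h(t),\hat u_h(t),t),\ f_2(y^\star(t),u^\star(t),t)-f_2(\hat y_h(t),\hat u_h(t),t)\big)\big\|_2^2\le C_fh^{2\lambda\eta}. \]
   Context: Let $T>0$. $\mathcal{X}$: pairs $(y,u)$, $y:[0,T]\to\mathbb{R}^{n_y}$ with $y\in L^\infty$, $\dot y\in L^2$, $u\in L^\infty([0,T];\mathbb{R}^{n_u})$; $\|(y,u)\|_{\mathcal{X}}=\|\dot y\|_{L^2}+\operatorname{ess\,sup}_t\|(y(t),u(t))\|_\infty$. Given $M,b$ on $\mathbb{R}^{n_y}\times\mathbb{R}^{n_y}$ (values in $\mathbb{R}$, $\mathbb{R}^{n_b}$), $f_1,f_2$ on $\mathbb{R}^{n_y}\times\mathbb{R}^{n_u}\times[0,T]$ (values in $\mathbb{R}^{n_y}$, $\mathbb{R}^{n_c}$), and bounds $y_L\le y_R$, $u_L\le u_R$, the optimal control problem minimizes $M(y(0),y(T))$ over $\mathcal{X}$ subject to $b(y(0),y(T))=0$, $\dot y=f_1(y,u,t)$, $f_2(y,u,t)=0$ a.e., and the bounds for all $t$; $(y^\star,u^\star)$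 is a local (hence feasible) minimizer. Mesh $0=t_1<\dots<t_{N+1}=T$, $h=\max_i(t_{i+1}-t_i)$, degree $p$; $\mathcal{X}_{h,p}$: $y_h$ continuous and polynomial of degree $\le p$ on each $[t_i,t_{i+1}]$, $u_h$ polynomial of degree $\le p-1$ on each $[t_i,t_{i+1}]$. $\mathcal{B}_{h,p}\subset\mathcal{X}_{h,p}$ is the set of pairs satisfying the bounds at the sampling points of the discretization. (Approximability) there are $h_0,\eta,C_\eta>0$ such that for each $h\le h_0$ there exists $(y_h,u_h)\in\mathcal{B}_{h,p}$ with $\|(y^\star,u^\star)-(y_h,u_h)\|_{\mathcal{X}}\le C_\eta h^\eta$; $(\hat y_h,\hat u_h)$ denotes a fixed such pair. (A.3): there are $\lambda\in(0,1]$, $C_\lambda>0$, $\epsilon>0$ with $|M(y^\star(0),y^\star(T))-M(a,a')|\le C_\lambda\|(y^\star(0)-a,y^\star(T)-a')\|_2^\lambda$ and $\|b(y^\star(0),y^\star(T))-b(a,a')\|_2\le C_\lambda\|(y^\star(0)-a,y^\star(T)-a')\|_2^\lambda$ whenever $\|(y^\star(0)-a,y^\star(T)-a')\|_2\le\epsilon$, and for each $t\in[0,T]$, $\|(f_1(y^\star(t),u^\star(t),t)-f_1(v,w,t),f_2(y^\star(t),u^\star(t),t)-f_2(v,w,t))\|_2\le C_\lambda\|(y^\star(t)-v,u^\star(t)-w)\|_2^\lambda$ whenever $\|(y^\star(t)-v,u^\star(t)-w)\|_2\le\epsilon$. *)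

theory Defs
  imports "HOL-Analysis.Analysis" "HOL-Probability.Essential_Supremum"
begin

text \<open>A weak derivative in L2 of y on [0,T]: y is the (continuous) primitive of g,
  and g is square integrable.\<close>
definition L2_deriv :: "real \<Rightarrow> (real \<Rightarrow> real^'n) \<Rightarrow> (real \<Rightarrow> real^'n) \<Rightarrow> bool" where
  "L2_deriv T y g \<longleftrightarrow> g integrable_on {0..T} \<and> (\<lambda>t. norm (g t) ^ 2) integrable_on {0..T}
     \<and> (\<forall>t\<in>{0..T}. y t = y 0 + integral {0..t} g)"

definition ess_sup_inf :: "real \<Rightarrow> (real \<Rightarrow> real^'ny) \<Rightarrow> (real \<Rightarrow> real^'nu) \<Rightarrow> ereal" where
  "ess_sup_inf T y u = esssup (lebesgue_on {0..T}) (\<lambda>t. ereal (infnorm (y t, u t)))"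

definition in_X :: "real \<Rightarrow> (real \<Rightarrow> real^'ny) \<Rightarrow> (real \<Rightarrow> real^'nu) \<Rightarrow> bool" where
  "in_X T y u \<longleftrightarrow> (\<exists>g. L2_deriv T y g) \<and> u \<in> borel_measurable (lebesgue_on {0..T})
     \<and> ess_sup_inf T y u < \<infinity>"

definition X_norm :: "real \<Rightarrow> (real \<Rightarrow> real^'ny) \<Rightarrow> (real \<Rightarrow> real^'nu) \<Rightarrow> ereal" where
  "X_norm T y u = ereal (sqrt (integral {0..T} (\<lambda>t. norm ((SOME g. L2_deriv T y g) t) ^ 2)))
     + ess_sup_inf T y u"

definition feasible ::
  "real \<Rightarrow> (real^'ny \<Rightarrow> real^'ny \<Rightarrow> real^'nb)
   \<Rightarrow> (real^'ny \<Rightarrow> real^'nu \<Rightarrow> real \<Rightarrow> real^'ny) \<Rightarrow> (real^'ny \<Rightarrow> real^'nu \<Rightarrow> real \<Rightarrow> real^'nc)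
   \<Rightarrow> real^'ny \<Rightarrow> real^'ny \<Rightarrow> real^'nu \<Rightarrow> real^'nu
   \<Rightarrow> (real \<Rightarrow> real^'ny) \<Rightarrow> (real \<Rightarrow> real^'nu) \<Rightarrow> bool" where
  "feasible T b f1 f2 yL yR uL uR y u \<longleftrightarrow>
     in_X T y u \<and> b (y 0) (y T) = 0
     \<and> (\<exists>g. L2_deriv T y g \<and> (AE t in lebesgue_on {0..T}. g t = f1 (y t) (u t) t))
     \<and> (AE t in lebesgue_on {0..T}. f2 (y t) (u t) t = 0)
     \<and> (\<forall>t\<in>{0..T}. yL \<le> y t \<and> y t \<le> yR \<and> uL \<le> u t \<and> u t \<le> uR)"

definition local_minimizer ::
  "real \<Rightarrow> (real^'ny \<Rightarrow> real^'ny \<Rightarrow> real) \<Rightarrow> (real^'ny \<Rightarrow> real^'ny \<Rightarrow> real^'nb)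
   \<Rightarrow> (real^'ny \<Rightarrow> real^'nu \<Rightarrow> real \<Rightarrow> real^'ny) \<Rightarrow> (real^'ny \<Rightarrow> real^'nu \<Rightarrow> real \<Rightarrow> real^'nc)
   \<Rightarrow> real^'ny \<Rightarrow> real^'ny \<Rightarrow> real^'nu \<Rightarrow> real^'nu
   \<Rightarrow> (real \<Rightarrow> real^'ny) \<Rightarrow> (real \<Rightarrow> real^'nu) \<Rightarrow> bool" where
  "local_minimizer T M b f1 f2 yL yR uL uR ys us \<longleftrightarrow>
     feasible T b f1 f2 yL yR uL uR ys us \<and>
     (\<exists>\<delta>>0. \<forall>y u. feasible T b f1 f2 yL yR uL uR y u
        \<and> X_norm T (\<lambda>t. ys t - y t) (\<lambda>t. us t - u t) \<le> ereal \<delta>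
        \<longrightarrow> M (ys 0) (ys T) \<le> M (y 0) (y T))"

definition is_mesh :: "real \<Rightarrow> real \<Rightarrow> nat \<Rightarrow> (nat \<Rightarrow> real) \<Rightarrow> bool" where
  "is_mesh T h N tm \<longleftrightarrow> N \<ge> 1 \<and> tm 0 = 0 \<and> tm N = T \<and> (\<forall>i<N. tm i < tm (Suc i))
     \<and> h = Max ((\<lambda>i. tm (Suc i) - tm i) ` {..<N})"

definition poly_on :: "nat \<Rightarrow> real set \<Rightarrow> (real \<Rightarrow> real^'n) \<Rightarrow> bool" where
  "poly_on d S v \<longleftrightarrow> (\<exists>c :: nat \<Rightarrow> real^'n. \<forall>t\<in>S. v t = (\<Sum>k\<le>d. (t ^ k) *\<^sub>R c k))"

definition in_Xhp :: "real \<Rightarrow> nat \<Rightarrow> nat \<Rightarrow> (nat \<Rightarrow> real)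
     \<Rightarrow> (real \<Rightarrow> real^'ny) \<Rightarrow> (real \<Rightarrow> real^'nu) \<Rightarrow> bool" where
  "in_Xhp T p N tm y u \<longleftrightarrow> continuous_on {0..T} y
     \<and> (\<forall>i<N. poly_on p {tm i..tm (Suc i)} y \<and> poly_on (p - 1) {tm i<..<tm (Suc i)} u)"

definition in_Bhp :: "real \<Rightarrow> nat \<Rightarrow> nat \<Rightarrow> (nat \<Rightarrow> real) \<Rightarrow> real set
     \<Rightarrow> real^'ny \<Rightarrow> real^'ny \<Rightarrow> real^'nu \<Rightarrow> real^'nu
     \<Rightarrow> (real \<Rightarrow> real^'ny) \<Rightarrow> (real \<Rightarrow> real^'nu) \<Rightarrow> bool" where
  "in_Bhp T p N tm S yL yR uL uR y u \<longleftrightarrow> in_Xhp T p N tm y u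
     \<and> (\<forall>t\<in>S. yL \<le> y t \<and> y t \<le> yR \<and> uL \<le> u t \<and> u t \<le> uR)"

end

theory Submission
  imports Defs
begin
lemma cont_AE_le:
  fixes f :: "real \<Rightarrow> real"
  assumes T: "T > 0" and cont: "continuous_on {0..T} f"
    and ae: "AE t in lebesgue_on {0..T}. f t \<le> c"
    and t0: "t0 \<in> {0..T}"
  shows "f t0 \<le> c"
proof (rule ccontr)
  assume "\<not> f t0 \<le> c"
  hence gt: "f t0 - c > 0" by simp
  have "\<exists>d>0. \<forall>t\<in>{0..T}. dist t t0 < d \<longrightarrow> dist (f t) (f t0) < f t0 - c"
    using cont t0 gt unfolding continuous_on_iff by blast
  then obtain d where d: "d > 0" and
    dd: "\<And>t. t \<in> {0..T} \<Longrightarrow> dist t t0 < d \<Longrightarrow> dist (f t) (f t0) < f t0 - c"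
    by blast
  define a where "a = max 0 (t0 - d/2)"
  define b where "b = min T (t0 + d/2)"
  have ab: "a < b" using t0 T d unfolding a_def b_def by auto
  have sub: "{a..b} \<subseteq> {0..T}" using t0 unfolding a_def b_def by auto
  have inI: "f t > c" if "t \<in> {a..b}" for t
  proof -
    have "dist t t0 < d" using that t0 d unfolding a_def b_def dist_real_def by auto
    with dd[of t] sub that have "dist (f t) (f t0) < f t0 - c" by auto
    thus ?thesis unfolding dist_real_def by auto
  qed
  have ae2: "AE t in lebesgue_on {0..T}. t \<notin> {a..b}"
    using ae
  proof eventually_elim
    case (elim t) thus ?case using inI[of t] by linarith
  qed
  have sets: "{a..b} \<in> sets (lebesgue_on {0..T})"
    using sub by (simp add: sets_restrict_space_iff)
  have spc: "{x\<in>space (lebesgue_on {0..T}). \<not> x \<notin> {a..b}} = {a..b}"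
    using sub by auto
  have "emeasure (lebesgue_on {0..T}) {a..b} = 0"
    using AE_iff_measurable[OF sets spc] ae2 by simp
  moreover have "emeasure (lebesgue_on {0..T}) {a..b} = emeasure lebesgue {a..b}"
    using sub by (simp add: emeasure_restrict_space)
  moreover have "emeasure lebesgue {a..b} = ennreal (b - a)" using ab by simp
  ultimately have "ennreal (b - a) = 0" by simp
  thus False using ab by simp
qed

theorem mainTheorem13:
  fixes T :: real and p :: nat
    and M :: "real^'ny \<Rightarrow> real^'ny \<Rightarrow> real"
    and b :: "real^'ny \<Rightarrow> real^'ny \<Rightarrow> real^'nb"
    and f1 :: "real^'ny \<Rightarrow> real^'nu \<Rightarrow> real \<Rightarrow> real^'ny"
    and f2 :: "real^'ny \<Rightarrow> real^'nu \<Rightarrow> real \<Rightarrow> real^'nc"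
    and yL yR :: "real^'ny" and uL uR :: "real^'nu"
    and ys :: "real \<Rightarrow> real^'ny" and us :: "real \<Rightarrow> real^'nu"
    and Nm :: "real \<Rightarrow> nat" and tm :: "real \<Rightarrow> nat \<Rightarrow> real" and S :: "real \<Rightarrow> real set"
    and yh :: "real \<Rightarrow> real \<Rightarrow> real^'ny" and uh :: "real \<Rightarrow> real \<Rightarrow> real^'nu"
    and h0 eta Ceta lam Clam eps :: real
  assumes T: "T > 0" and p: "p \<ge> 1"
    and bounds: "yL \<le> yR" "uL \<le> uR"
    and locmin: "local_minimizer T M b f1 f2 yL yR uL uR ys us"
    \<comment> \<open>Approximability, with a family of meshes and sampling points indexed by h\<close>
    and approx_const: "h0 > 0" "eta > 0" "Ceta > 0"
    and mesh: "\<And>h. 0 < h \<Longrightarrow> h \<le> h0 \<Longrightarrow> is_mesh T h (Nm h) (tm h) \<and> S h \<subseteq> {0..T}"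
    and approx_B: "\<And>h. 0 < h \<Longrightarrow> h \<le> h0 \<Longrightarrow>
        in_Bhp T p (Nm h) (tm h) (S h) yL yR uL uR (yh h) (uh h)"
    and approx_err: "\<And>h. 0 < h \<Longrightarrow> h \<le> h0 \<Longrightarrow>
        X_norm T (\<lambda>t. ys t - yh h t) (\<lambda>t. us t - uh h t) \<le> ereal (Ceta * h powr eta)"
    \<comment> \<open>(A.3)\<close>
    and A3_const: "0 < lam" "lam \<le> 1" "Clam > 0" "eps > 0"
    and A3_M: "\<And>a a'. norm (ys 0 - a, ys T - a') \<le> eps \<Longrightarrow>
        \<bar>M (ys 0) (ys T) - M a a'\<bar> \<le> Clam * norm (ys 0 - a, ys T - a') powr lam"
    and A3_b: "\<And>a a'. norm (ys 0 - a, ys T - a') \<le> eps \<Longrightarrow>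
        norm (b (ys 0) (ys T) - b a a') \<le> Clam * norm (ys 0 - a, ys T - a') powr lam"
    and A3_f: "\<And>t v w. t \<in> {0..T} \<Longrightarrow> norm (ys t - v, us t - w) \<le> eps \<Longrightarrow>
        norm (f1 (ys t) (us t) t - f1 v w t, f2 (ys t) (us t) t - f2 v w t)
          \<le> Clam * norm (ys t - v, us t - w) powr lam"
  shows "\<exists>CM Cb Cf h1. CM > 0 \<and> Cb > 0 \<and> Cf > 0 \<and> h1 > 0 \<and>
     (\<forall>h. 0 < h \<and> h \<le> h1 \<longrightarrow>
        \<bar>M (ys 0) (ys T) - M (yh h 0) (yh h T)\<bar> \<le> CM * h powr (lam * eta)
      \<and> norm (b (yh h 0) (yh h T)) ^ 2 \<le> Cb * h powr (2 * lam * eta)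
      \<and> (AE t in lebesgue_on {0..T}.
           norm (f1 (ys t) (us t) t - f1 (yh h t) (uh h t) t,
                 f2 (ys t) (us t) t - f2 (yh h t) (uh h t) t) ^ 2
           \<le> Cf * h powr (2 * lam * eta)))"
proof -
  note fe = locmin[unfolded local_minimizer_def feasible_def, THEN conjunct1]
  from fe obtain g where g: "L2_deriv T ys g" unfolding in_X_def by blast
  have b0: "b (ys 0) (ys T) = 0" using fe by blast
  have ys_cont: "continuous_on {0..T} ys"
  proof -
    have "continuous_on {0..T} (\<lambda>t. ys 0 + integral {0..t} g)"
      using g unfolding L2_deriv_def
      by (intro continuous_intros indefinite_integral_continuous_1) auto
    thus ?thesis using g unfolding L2_deriv_def by (metis (no_types, lifting) continuous_on_cong)
  qed
  define D where "D = sqrt (real DIM((real^'ny) \<times> (real^'nu)))"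
  have "real 0 + 1 \<le> real DIM((real^'ny) \<times> (real^'nu))"
    using DIM_positive nat_less_real_le by blast
  hence D0: "D \<ge> 1" unfolding D_def by (intro real_sqrt_ge_one) (simp only: of_nat_0 add_0)
  define E where "E = 2 * D * Ceta"
  have E0: "E > 0" using D0 approx_const unfolding E_def by simp
  define h1 where "h1 = min h0 ((eps / E) powr (1 / eta))"
  have h10: "h1 > 0" unfolding h1_def using approx_const A3_const E0 by simp
  have key: "norm (ys 0 - yh h 0, ys T - yh h T) \<le> E * h powr eta
     \<and> (AE t in lebesgue_on {0..T}. norm (ys t - yh h t, us t - uh h t) \<le> E * h powr eta)"
    if h: "0 < h" "h \<le> h0" for h
  proof -
    define \<delta> where "\<delta> = Ceta * h powr eta"
    have "X_norm T (\<lambda>t. ys t - yh h t) (\<lambda>t. us t - uh h t) \<le> ereal \<delta>"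
      using approx_err h unfolding \<delta>_def by blast
    moreover
    have s0: "0 \<le> integral {0..T} (\<lambda>t. norm ((SOME g. L2_deriv T (\<lambda>t. ys t - yh h t) g) t) ^ 2)"
      (is "0 \<le> integral _ ?F")
      by (cases "?F integrable_on {0..T}") (auto intro: integral_nonneg simp: not_integrable_integral)
    ultimately have ess: "ess_sup_inf T (\<lambda>t. ys t - yh h t) (\<lambda>t. us t - uh h t) \<le> ereal \<delta>"
      unfolding X_norm_def
      by (meson order_trans ereal_le_add_self2 ereal_less_eq(5) real_sqrt_ge_zero)
    have ae1: "AE t in lebesgue_on {0..T}. infnorm (ys t - yh h t, us t - uh h t) \<le> \<delta>"
      using esssup_AE[where M="lebesgue_on {0..T}" and f="\<lambda>t. ereal (infnorm (ys t - yh h t, us t - uh h t))"]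
      proof eventually_elim
        case (elim t)
        have "ereal (infnorm (ys t - yh h t, us t - uh h t)) \<le> ereal \<delta>"
          using order_trans[OF elim ess[unfolded ess_sup_inf_def]] .
        thus ?case by simp
      qed
    have ae2: "AE t in lebesgue_on {0..T}. norm (ys t - yh h t, us t - uh h t) \<le> D * \<delta>"
      using ae1
    proof eventually_elim
      case (elim t)
      have "norm (ys t - yh h t, us t - uh h t) \<le> D * infnorm (ys t - yh h t, us t - uh h t)"
        unfolding D_def by (rule norm_le_infnorm)
      also have "\<dots> \<le> D * \<delta>" using elim D0 by (intro mult_left_mono) auto
      finally show ?case .
    qed
    have ae3: "AE t in lebesgue_on {0..T}. norm (ys t - yh h t) \<le> D * \<delta>"
      using ae2 by eventually_elim (meson norm_fst_le order_trans)
    have yhc: "continuous_on {0..T} (yh h)"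
      using approx_B[OF h] unfolding in_Bhp_def in_Xhp_def by blast
    have cc: "continuous_on {0..T} (\<lambda>t. norm (ys t - yh h t))"
      by (intro continuous_intros ys_cont yhc)
    have e0: "norm (ys 0 - yh h 0) \<le> D * \<delta>"
      using cont_AE_le[OF T cc ae3] T by simp
    have eT: "norm (ys T - yh h T) \<le> D * \<delta>"
      using cont_AE_le[OF T cc ae3] T by simp
    have EE: "D * \<delta> + D * \<delta> = E * h powr eta" unfolding E_def \<delta>_def by simp
    have "norm (ys 0 - yh h 0, ys T - yh h T) \<le> E * h powr eta"
      using norm_Pair_le[of "ys 0 - yh h 0" "ys T - yh h T"] e0 eT EE by linarith
    moreover have dpos: "0 \<le> D * \<delta>" using D0 approx_const unfolding \<delta>_def by simp
    have DE: "D * \<delta> \<le> E * h powr eta" using EE dpos by linarith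
    have "AE t in lebesgue_on {0..T}. norm (ys t - yh h t, us t - uh h t) \<le> E * h powr eta"
      using ae2
    proof eventually_elim
      case (elim t) thus ?case using DE by linarith
    qed
    ultimately show ?thesis by blast
  qed
  have small: "E * h powr eta \<le> eps" if h: "0 < h" "h \<le> h1" for h
  proof -
    have "h powr eta \<le> ((eps / E) powr (1 / eta)) powr eta"
      using h approx_const unfolding h1_def by (intro powr_mono2) auto
    also have "\<dots> = eps / E" using approx_const A3_const E0 by (simp add: powr_powr)
    finally show ?thesis using E0 by (simp add: field_simps)
  qed
  have pw: "n powr lam \<le> E powr lam * h powr (lam * eta)"
    if "0 \<le> n" "n \<le> E * h powr eta" "0 < h" for n h
  proof -
    have "n powr lam \<le> (E * h powr eta) powr lam" using that A3_const by (intro powr_mono2) auto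
    also have "\<dots> = E powr lam * h powr (lam * eta)"
      using E0 that by (simp add: powr_mult powr_powr mult_ac)
    finally show ?thesis .
  qed
  define C where "C = Clam * E powr lam"
  have C0: "C > 0" unfolding C_def using A3_const E0 by simp
  have sq: "x ^ 2 \<le> C ^ 2 * h powr (2 * lam * eta)"
    if "0 \<le> x" "x \<le> C * h powr (lam * eta)" "0 < h" for x h
  proof -
    have "x ^ 2 \<le> (C * h powr (lam * eta)) ^ 2" using that by (intro power_mono) auto
    also have "\<dots> = C ^ 2 * h powr (2 * lam * eta)"
    proof -
      have "h powr (2*lam*eta) = h powr (lam*eta) * h powr (lam*eta)"
        by (metis powr_add mult_2 mult.assoc)
      thus ?thesis by (simp add: power2_eq_square)
    qed
    finally show ?thesis .
  qed
  have main: "\<bar>M (ys 0) (ys T) - M (yh h 0) (yh h T)\<bar> \<le> C * h powr (lam * eta)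
      \<and> norm (b (yh h 0) (yh h T)) ^ 2 \<le> C ^ 2 * h powr (2 * lam * eta)
      \<and> (AE t in lebesgue_on {0..T}.
           norm (f1 (ys t) (us t) t - f1 (yh h t) (uh h t) t,
                 f2 (ys t) (us t) t - f2 (yh h t) (uh h t) t) ^ 2
           \<le> C ^ 2 * h powr (2 * lam * eta))" if h: "0 < h" "h \<le> h1" for h
  proof -
    have hh: "h \<le> h0" using h unfolding h1_def by simp
    note k = key[OF h(1) hh]
    note sm = small[OF h]
    let ?n = "norm (ys 0 - yh h 0, ys T - yh h T)"
    have n1: "?n \<le> eps" using k sm by linarith
    have n2: "Clam * ?n powr lam \<le> C * h powr (lam * eta)"
      unfolding C_def using pw[of ?n h] k h A3_const by (simp add: mult.assoc)
    have m: "\<bar>M (ys 0) (ys T) - M (yh h 0) (yh h T)\<bar> \<le> C * h powr (lam * eta)"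
      using A3_M[OF n1] n2 by linarith
    have "norm (b (yh h 0) (yh h T)) \<le> C * h powr (lam * eta)"
      using A3_b[OF n1] n2 b0 by (simp add: norm_minus_commute)
    hence bb: "norm (b (yh h 0) (yh h T)) ^ 2 \<le> C ^ 2 * h powr (2 * lam * eta)"
      using sq h by simp
    have ff: "AE t in lebesgue_on {0..T}.
           norm (f1 (ys t) (us t) t - f1 (yh h t) (uh h t) t,
                 f2 (ys t) (us t) t - f2 (yh h t) (uh h t) t) ^ 2
           \<le> C ^ 2 * h powr (2 * lam * eta)"
      using k[THEN conjunct2] AE_space
    proof eventually_elim
      case (elim t)
      have t: "t \<in> {0..T}" using elim by simp
      let ?m = "norm (ys t - yh h t, us t - uh h t)"
      have m1: "?m \<le> eps" using elim sm by linarith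
      have "Clam * ?m powr lam \<le> C * h powr (lam * eta)"
        unfolding C_def using pw[of ?m h] elim h A3_const by (simp add: mult.assoc)
      hence "norm (f1 (ys t) (us t) t - f1 (yh h t) (uh h t) t,
                 f2 (ys t) (us t) t - f2 (yh h t) (uh h t) t) \<le> C * h powr (lam * eta)"
        using A3_f[OF t m1] by linarith
      thus ?case using sq h by simp
    qed
    show ?thesis using m bb ff by blast
  qed
  show ?thesis
    apply (rule exI[of _ C], rule exI[of _ "C^2"], rule exI[of _ "C^2"], rule exI[of _ h1])
    using C0 h10 main by simp
qed

end
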